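(* Let $X$ be a Banach space and let $\Pi(X)=\{(x,x^* )\in S_X\times S_{X^*}\colon x^*(x)=1\}$. The following are equivalent: (i) $X$ has property [P]; (ii) the set $\{(x,x^* )\in\operatorname{str\text{-}exp}(B_X)\times\operatorname{SE}(X)\colon \|x^*\|=x^*(x)=1\}$ is dense in $\Pi(X)$; (iii) $X$ has property [P] witnessed by the function $\varepsilon\mapsto\varepsilon^2/2$.
   Context: $\operatorname{SE}(X)$ is the set of $x^*\in X^*$ strongly exposing $B_X$: there is $x_0\in B_X$ with $\operatorname{Re}x^*(x_0)=\sup_{B_X}\operatorname{Re}x^*$ and every sequence $\{x_n\}\subset B_X$ with $\operatorname{Re}x^*(x_n)\to\operatorname{Re}x^*(x_0)$ converges in norm to $x_0$; $\operatorname{str\text{-}exp}(B_X)$ is the set of points of $B_X$ strongly exposed by some functional. $X$ has property [P] (witnessed by a function $\varepsilon\in(0,1)\mapsto\eta(\varepsilon)>0$) if whenever $x\in S_X$, $x^*\in S_{X^*}$ satisfy $\operatorname{Re}x^*(x)>1-\eta(\varepsilon)$, there exist $y^*\in\operatorname{SE}(X)$ and $y\in S_X$ with $\|y^*\|=y^*(y)=1$, $\|y^*-x^*\|<\varepsilon$ and $\|y-x\|<\varepsilon$. Density in $\Pi(X)$ is with respect to the product norm topology. *)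

theory Defs
  imports "HOL-Analysis.Analysis"
begin

text \<open>B_X = cball 0 1, S_X = sphere 0 1.  (A complex Banach space is an instance
  of the class banach; Re x* corresponds isometrically to a real functional.)\<close>

definition strongly_exposes :: "('a::real_normed_vector \<Rightarrow>\<^sub>L real) \<Rightarrow> 'a \<Rightarrow> bool" where
  "strongly_exposes f x0 \<longleftrightarrow>
     x0 \<in> cball 0 1 \<and>
     f x0 = (SUP x\<in>cball 0 1. f x) \<and>
     (\<forall>xs. (\<forall>n. xs n \<in> cball 0 1) \<longrightarrow> (\<lambda>n. f (xs n)) \<longlonglongrightarrow> f x0 \<longrightarrow> xs \<longlonglongrightarrow> x0)"

definition SE :: "('a::real_normed_vector \<Rightarrow>\<^sub>L real) set" where
  "SE = {f. \<exists>x0. strongly_exposes f x0}"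

definition str_exp_ball :: "'a::real_normed_vector set" where
  "str_exp_ball = {x0. \<exists>f. strongly_exposes f x0}"

definition propP_with :: "'a::real_normed_vector itself \<Rightarrow> (real \<Rightarrow> real) \<Rightarrow> bool" where
  "propP_with _ eta \<longleftrightarrow>
     (\<forall>\<epsilon>. 0 < \<epsilon> \<and> \<epsilon> < 1 \<longrightarrow>
       (\<forall>x::'a. \<forall>g :: 'a \<Rightarrow>\<^sub>L real. norm x = 1 \<and> norm g = 1 \<and> blinfun_apply g x > 1 - eta \<epsilon> \<longrightarrow>
          (\<exists>ys \<in> SE. \<exists>y. norm y = 1 \<and> norm ys = 1 \<and> blinfun_apply ys y = 1 \<and>
              norm (ys - g) < \<epsilon> \<and> norm (y - x) < \<epsilon>)))"

definition has_propP :: "'a::real_normed_vector itself \<Rightarrow> bool" where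
  "has_propP T \<longleftrightarrow> (\<exists>eta. (\<forall>\<epsilon>. 0 < \<epsilon> \<and> \<epsilon> < 1 \<longrightarrow> eta \<epsilon> > 0) \<and> propP_with T eta)"

definition PiX :: "('a::real_normed_vector \<times> ('a \<Rightarrow>\<^sub>L real)) set" where
  "PiX = {(x, f). norm x = 1 \<and> norm f = 1 \<and> blinfun_apply f x = 1}"

end

theory Submission
  imports Defs "HOL-Analysis.Analysis"
begin

definition sublin :: "('a::real_vector \<Rightarrow> real) \<Rightarrow> bool" where
  "sublin q \<longleftrightarrow> (\<forall>x y. q (x + y) \<le> q x + q y) \<and> (\<forall>c x. c > 0 \<longrightarrow> q (c *\<^sub>R x) \<le> c * q x)"

lemma sublin_add: "sublin q \<Longrightarrow> q (x + y) \<le> q x + q y"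
  unfolding sublin_def by blast

lemma sublin_scale_le: "sublin q \<Longrightarrow> c > 0 \<Longrightarrow> q (c *\<^sub>R x) \<le> c * q x"
  unfolding sublin_def by blast

lemma sublin_scale:
  assumes "sublin q" "c > 0" shows "q (c *\<^sub>R x) = c * q x"
proof -
  have "q x = q ((1/c) *\<^sub>R (c *\<^sub>R x))" using assms by simp
  also have "\<dots> \<le> (1/c) * q (c *\<^sub>R x)" by (rule sublin_scale_le[OF assms(1)]) (use assms(2) in simp)
  finally have "q x \<le> (1/c) * q (c *\<^sub>R x)" .
  hence "c * q x \<le> q (c *\<^sub>R x)" using assms(2) by (simp add: field_simps)
  thus ?thesis using sublin_scale_le[OF assms, of x] by linarith
qed

lemma sublin_0: assumes "sublin q" shows "q 0 = 0"
  using sublin_scale[OF assms, of 2 0] by simp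

lemma sublin_scale_ge0: assumes "sublin q" "c \<ge> 0" shows "q (c *\<^sub>R x) = c * q x"
  using assms sublin_scale[OF assms(1)] sublin_0[OF assms(1)]
  by (cases "c = 0") auto

lemma sublin_neg: assumes "sublin q" shows "- q (- x) \<le> q x"
  using sublin_add[OF assms, of x "-x"] sublin_0[OF assms] by simp

definition epi :: "('a \<Rightarrow> real) \<Rightarrow> ('a \<times> real) set" where
  "epi q = {(x, r). q x \<le> r}"

lemma epi_subset_iff: "epi q1 \<subseteq> epi q2 \<longleftrightarrow> (\<forall>x. q2 x \<le> q1 x)"
proof
  assume "epi q1 \<subseteq> epi q2"
  thus "\<forall>x. q2 x \<le> q1 x" unfolding epi_def by auto
next
  assume "\<forall>x. q2 x \<le> q1 x"
  thus "epi q1 \<subseteq> epi q2" unfolding epi_def by (auto intro: order_trans)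
qed

lemma epi_eq: "epi q1 = epi q2 \<Longrightarrow> q1 = q2"
  by (rule ext, metis epi_subset_iff order_antisym order_refl)

lemma minimal_sublin_linear:
  fixes q :: "'a::real_vector \<Rightarrow> real"
  assumes q: "sublin q"
    and mini: "\<And>r. sublin r \<Longrightarrow> (\<forall>x. r x \<le> q x) \<Longrightarrow> r = q"
  shows "q (- a) = - q a"
proof -
  define qa where "qa x = (INF t\<in>{0..}. q (x + t *\<^sub>R a) - t * q a)" for x
  have lb: "- q (- x) \<le> q (x + t *\<^sub>R a) - t * q a" if "t \<ge> 0" for x t
  proof -
    have "q (t *\<^sub>R a) \<le> q (x + t *\<^sub>R a) + q (- x)"
      using sublin_add[OF q, of "x + t *\<^sub>R a" "-x"] by simp
    thus ?thesis using sublin_scale_ge0[OF q that] by simp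
  qed
  have bdd: "bdd_below ((\<lambda>t. q (x + t *\<^sub>R a) - t * q a) ` {0..})" for x
    using lb by (intro bdd_belowI2) auto
  have qa_le: "qa x \<le> q (x + t *\<^sub>R a) - t * q a" if "t \<ge> 0" for x t
    unfolding qa_def using that bdd by (intro cINF_lower) auto
  have qa_ge: "c \<le> qa x" if "\<And>t. t \<ge> 0 \<Longrightarrow> c \<le> q (x + t *\<^sub>R a) - t * q a" for c x
    unfolding qa_def using that by (intro cINF_greatest) auto
  have "sublin qa"
    unfolding sublin_def
  proof safe
    fix x y
    have "qa (x + y) - qa y \<le> q (x + s *\<^sub>R a) - s * q a" if "s \<ge> 0" for s
    proof -
      have "qa (x + y) \<le> q (x + s *\<^sub>R a) - s * q a + (q (y + t *\<^sub>R a) - t * q a)" if "t \<ge> 0" for t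
      proof -
        have "qa (x + y) \<le> q ((x + y) + (s + t) *\<^sub>R a) - (s + t) * q a"
          using qa_le \<open>s \<ge> 0\<close> \<open>t \<ge> 0\<close> by simp
        also have "q ((x + y) + (s + t) *\<^sub>R a) \<le> q (x + s *\<^sub>R a) + q (y + t *\<^sub>R a)"
          using sublin_add[OF q, of "x + s *\<^sub>R a" "y + t *\<^sub>R a"]
          by (simp add: algebra_simps scaleR_add_left)
        finally show ?thesis by (simp add: algebra_simps)
      qed
      hence "qa (x + y) - (q (x + s *\<^sub>R a) - s * q a) \<le> qa y"
        by (intro qa_ge) (simp add: algebra_simps)
      thus ?thesis by simp
    qed
    hence "qa (x + y) - qa y \<le> qa x" by (intro qa_ge) auto
    thus "qa (x + y) \<le> qa x + qa y" by simp
  next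
    fix c :: real and x assume c: "c > 0"
    have "qa (c *\<^sub>R x) / c \<le> q (x + t *\<^sub>R a) - t * q a" if "t \<ge> 0" for t
    proof -
      have "qa (c *\<^sub>R x) \<le> q (c *\<^sub>R x + (c * t) *\<^sub>R a) - (c * t) * q a"
        using qa_le c that by simp
      also have "c *\<^sub>R x + (c * t) *\<^sub>R a = c *\<^sub>R (x + t *\<^sub>R a)" by (simp add: algebra_simps)
      also have "q \<dots> = c * q (x + t *\<^sub>R a)" using sublin_scale[OF q c] .
      finally show ?thesis using c by (simp add: field_simps)
    qed
    hence "qa (c *\<^sub>R x) / c \<le> qa x" by (intro qa_ge) auto
    thus "qa (c *\<^sub>R x) \<le> c * qa x" using c by (simp add: field_simps)
  qed
  moreover have "\<forall>x. qa x \<le> q x" using qa_le[of 0] by simp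
  ultimately have "qa = q" by (rule mini)
  hence "q (- a) \<le> q (- a + 1 *\<^sub>R a) - 1 * q a" using qa_le[of 1 "-a"] by simp
  hence "q (- a) \<le> - q a" using sublin_0[OF q] by simp
  thus ?thesis using sublin_neg[OF q, of a] by simp
qed

lemma sublin_linear:
  fixes q :: "'a::real_vector \<Rightarrow> real"
  assumes q: "sublin q" and neg: "\<And>a. q (- a) = - q a"
  shows "linear q"
proof (rule linearI)
  fix x y
  have "q x \<le> q (x + y) + q (- y)" using sublin_add[OF q, of "x + y" "-y"] by simp
  thus "q (x + y) = q x + q y" using neg[of y] sublin_add[OF q, of x y] by simp
next
  fix c :: real and x
  show "q (c *\<^sub>R x) = c *\<^sub>R q x"
  proof (cases "c \<ge> 0")
    case True thus ?thesis using sublin_scale_ge0[OF q] by simp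
  next
    case False
    hence "q (c *\<^sub>R x) = q ((-c) *\<^sub>R (- x))" by simp
    also have "\<dots> = (-c) * q (-x)" using sublin_scale_ge0[OF q, of "-c" "-x"] False by simp
    finally show ?thesis using neg[of x] by simp
  qed
qed

lemma hahn_banach_sublin:
  fixes p :: "'a::real_vector \<Rightarrow> real"
  assumes p: "sublin p"
  shows "\<exists>h. linear h \<and> (\<forall>x. h x \<le> p x)"
proof -
  define A where "A = {epi q | q. sublin q \<and> (\<forall>x. q x \<le> p x)}"
  have "\<exists>M\<in>A. \<forall>X\<in>A. M \<subseteq> X \<longrightarrow> X = M"
  proof (rule Zorn_Lemma2, safe)
    fix C assume C: "C \<in> chains A"
    show "\<exists>U\<in>A. \<forall>X\<in>C. X \<subseteq> U"
    proof (cases "C = {}")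
      case True thus ?thesis using p unfolding A_def by auto
    next
      case False
      define F where "F = {q. sublin q \<and> (\<forall>x. q x \<le> p x) \<and> epi q \<in> C}"
      have CF: "\<forall>X\<in>C. \<exists>q\<in>F. X = epi q"
      proof
        fix X assume "X \<in> C"
        with C have "X \<in> A" unfolding chains_def by auto
        then obtain q where "X = epi q" "sublin q" "\<forall>x. q x \<le> p x" unfolding A_def by auto
        with \<open>X \<in> C\<close> show "\<exists>q\<in>F. X = epi q" unfolding F_def by auto
      qed
      hence Fne: "F \<noteq> {}" using False by auto
      have chainF: "(\<forall>x. q1 x \<le> q2 x) \<or> (\<forall>x. q2 x \<le> q1 x)" if "q1 \<in> F" "q2 \<in> F" for q1 q2
      proof -
        have "epi q1 \<in> C" "epi q2 \<in> C" using that unfolding F_def by auto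
        hence "epi q1 \<subseteq> epi q2 \<or> epi q2 \<subseteq> epi q1" using C unfolding chains_def chain_subset_def by blast
        thus ?thesis unfolding epi_subset_iff by blast
      qed
      define qi where "qi x = (INF q\<in>F. q x)" for x
      have bdd: "bdd_below ((\<lambda>q. q x) ` F)" for x
      proof (rule bdd_belowI2[where m="- p (- x)"])
        fix q assume "q \<in> F"
        hence "sublin q" "q (-x) \<le> p (-x)" unfolding F_def by auto
        thus "- p (- x) \<le> q x" using sublin_neg[of q x] by linarith
      qed
      have qi_le: "qi x \<le> q x" if "q \<in> F" for q x
        unfolding qi_def using bdd that by (intro cINF_lower) auto
      have qi_ge: "c \<le> qi x" if "\<And>q. q \<in> F \<Longrightarrow> c \<le> q x" for c x
        unfolding qi_def using that Fne by (intro cINF_greatest) auto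
      have "sublin qi"
        unfolding sublin_def
      proof safe
        fix x y
        have "qi (x + y) - qi y \<le> q1 x" if q1: "q1 \<in> F" for q1
        proof -
          have "qi (x + y) - q1 x \<le> q2 y" if q2: "q2 \<in> F" for q2
          proof (cases "\<forall>x. q1 x \<le> q2 x")
            case True
            have "qi (x + y) \<le> q1 (x + y)" using qi_le q1 .
            also have "\<dots> \<le> q1 x + q1 y" using q1 unfolding F_def by (auto intro: sublin_add)
            finally show ?thesis using True[rule_format, of y] by linarith
          next
            case False
            hence le: "\<forall>x. q2 x \<le> q1 x" using chainF[OF q1 q2] by blast
            have "qi (x + y) \<le> q2 (x + y)" using qi_le q2 .
            also have "\<dots> \<le> q2 x + q2 y" using q2 unfolding F_def by (auto intro: sublin_add)
            finally show ?thesis using le[rule_format, of x] by linarith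
          qed
          hence "qi (x + y) - q1 x \<le> qi y" by (intro qi_ge) auto
          thus ?thesis by simp
        qed
        hence "qi (x + y) - qi y \<le> qi x" by (intro qi_ge) auto
        thus "qi (x + y) \<le> qi x + qi y" by simp
      next
        fix c :: real and x assume c: "c > 0"
        have "qi (c *\<^sub>R x) / c \<le> q x" if "q \<in> F" for q
        proof -
          have "qi (c *\<^sub>R x) \<le> q (c *\<^sub>R x)" using qi_le that .
          also have "\<dots> = c * q x" using that c unfolding F_def by (auto intro: sublin_scale)
          finally show ?thesis using c by (simp add: field_simps)
        qed
        hence "qi (c *\<^sub>R x) / c \<le> qi x" by (intro qi_ge) auto
        thus "qi (c *\<^sub>R x) \<le> c * qi x" using c by (simp add: field_simps)
      qed
      moreover have "\<forall>x. qi x \<le> p x"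
      proof
        fix x
        obtain q0 where "q0 \<in> F" using Fne by blast
        hence "qi x \<le> q0 x" "q0 x \<le> p x" using qi_le unfolding F_def by auto
        thus "qi x \<le> p x" by linarith
      qed
      ultimately have "epi qi \<in> A" unfolding A_def by blast
      moreover have "\<forall>X\<in>C. X \<subseteq> epi qi"
      proof
        fix X assume "X \<in> C"
        then obtain q where "q \<in> F" "X = epi q" using CF by blast
        thus "X \<subseteq> epi qi" using qi_le epi_subset_iff by blast
      qed
      ultimately show ?thesis by blast
    qed
  qed
  then obtain q where q: "sublin q" "\<forall>x. q x \<le> p x"
    and maxi: "\<forall>X\<in>A. epi q \<subseteq> X \<longrightarrow> X = epi q"
    unfolding A_def by blast
  have mini: "r = q" if "sublin r" "\<forall>x. r x \<le> q x" for r
  proof -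
    have "epi r \<in> A" using that q(2) unfolding A_def by (auto intro: order_trans)
    moreover have "epi q \<subseteq> epi r" using that epi_subset_iff by blast
    ultimately have "epi r = epi q" using maxi by blast
    thus ?thesis by (rule epi_eq)
  qed
  have "linear q" using sublin_linear[OF q(1)] minimal_sublin_linear[OF q(1) mini] by blast
  thus ?thesis using q(2) by blast
qed

lemma pow_half_small: "(e::real) > 0 \<Longrightarrow> \<exists>N. \<forall>n\<ge>N. (1/2::real)^n < e"
proof -
  assume "e > 0"
  then obtain N where N: "(1/2::real)^N < e" using real_arch_pow_inv[of e "1/2"] by auto
  have "(1/2::real)^n < e" if "n \<ge> N" for n
  proof -
    have "(1/2::real)^n \<le> (1/2)^N" by (rule power_decreasing) (use that in auto)
    thus ?thesis using N by linarith
  qed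
  thus ?thesis by blast
qed

lemma bp_point:
  fixes g :: "'a::banach \<Rightarrow> real" and C :: "'a set"
  assumes C: "closed C" and x: "x \<in> C" and k: "k > 0"
    and cont: "\<And>z. isCont g z" and bdd: "bdd_above (g ` C)"
  shows "\<exists>x0\<in>C. k * norm (x0 - x) \<le> g x0 - g x \<and>
            (\<forall>y\<in>C. k * norm (y - x0) \<le> g y - g x0 \<longrightarrow> y = x0)"
proof -
  define R where "R z y \<longleftrightarrow> y \<in> C \<and> k * norm (y - z) \<le> g y - g z" for z y
  define S where "S z = {y. R z y}" for z
  have R_trans: "R z w" if "R z y" "R y w" for z y w
  proof -
    have "norm (w - z) \<le> norm (w - y) + norm (y - z)"
      using norm_triangle_ineq[of "w - y" "y - z"] by simp
    hence "k * norm (w - z) \<le> k * norm (w - y) + k * norm (y - z)"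
      using k by (simp add: distrib_left[symmetric] mult_left_mono)
    thus ?thesis using that unfolding R_def by auto
  qed
  have R_refl: "R z z" if "z \<in> C" for z using that unfolding R_def by simp
  have Sne: "S z \<noteq> {}" if "z \<in> C" for z using R_refl[OF that] unfolding S_def by auto
  have Sbdd: "bdd_above (g ` S z)" for z
    using bdd unfolding S_def R_def by (rule bdd_above_mono) auto
  have step: "\<exists>y. R z y \<and> Sup (g ` S z) - (1/2)^n < g y" if zC: "z \<in> C" for z n
  proof -
    have "Sup (g ` S z) - (1/2)^n < Sup (g ` S z)" by simp
    then obtain v where "v \<in> g ` S z" "Sup (g ` S z) - (1/2)^n < v"
      using less_cSupD[of "g ` S z"] Sne[OF zC] by blast
    thus ?thesis unfolding S_def by auto
  qed
  define nxt where "nxt z n = (SOME y. R z y \<and> Sup (g ` S z) - (1/2)^n < g y)" for z n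
  have nxt: "R z (nxt z n) \<and> Sup (g ` S z) - (1/2)^n < g (nxt z n)" if "z \<in> C" for z n
    unfolding nxt_def using someI_ex[OF step[OF that]] .
  define xs where "xs = rec_nat x (\<lambda>n z. nxt z n)"
  have xs0: "xs 0 = x" and xsS: "xs (Suc n) = nxt (xs n) n" for n unfolding xs_def by simp_all
  have xsC: "xs n \<in> C" for n
  proof (induction n)
    case 0 thus ?case using x xs0 by simp
  next
    case (Suc n) thus ?case using nxt[OF Suc] xsS unfolding R_def by simp
  qed
  have xs_step: "R (xs n) (xs (Suc n)) \<and> Sup (g ` S (xs n)) - (1/2)^n < g (xs (Suc n))" for n
    using nxt[OF xsC[of n]] xsS by simp
  have mono: "R (xs n) (xs m)" if "n \<le> m" for n m
    using that
  proof (induction m)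
    case 0 thus ?case using R_refl xsC by simp
  next
    case (Suc m)
    show ?case
    proof (cases "n = Suc m")
      case True thus ?thesis using R_refl xsC by simp
    next
      case False
      hence "R (xs n) (xs m)" using Suc by simp
      thus ?thesis using R_trans xs_step by blast
    qed
  qed
  have small: "k * norm (y - xs (Suc n)) \<le> (1/2)^n" if "R (xs (Suc n)) y" for n y
  proof -
    have "R (xs n) y" using R_trans xs_step that by blast
    hence "g y \<le> Sup (g ` S (xs n))" using Sbdd unfolding S_def by (auto intro: cSup_upper)
    thus ?thesis using xs_step[of n] that unfolding R_def by linarith
  qed
  have small2: "norm (y - xs (Suc n)) \<le> (1/2)^n / k" if "R (xs (Suc n)) y" for n y
    using small[OF that] k by (simp add: field_simps)
  have "Cauchy xs"
    unfolding Cauchy_altdef2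
  proof safe
    fix e :: real assume e: "e > 0"
    obtain M where M: "\<forall>n\<ge>M. (1/2::real)^n < e * k" using pow_half_small[of "e*k"] e k by auto
    have "dist (xs n) (xs (Suc M)) < e" if "n \<ge> Suc M" for n
    proof -
      have "norm (xs n - xs (Suc M)) \<le> (1/2)^M / k" using small2 mono[OF that] by blast
      also have "\<dots> < e" using M k by (simp add: field_simps)
      finally show ?thesis by (simp add: dist_norm)
    qed
    thus "\<exists>N. \<forall>n\<ge>N. dist (xs n) (xs N) < e" by blast
  qed
  then obtain x0 where lim: "xs \<longlonglongrightarrow> x0" using Cauchy_convergent convergent_def by blast
  have x0C: "x0 \<in> C" using closed_sequentially[OF C] xsC lim by blast
  have glim: "(\<lambda>m. g (xs m)) \<longlonglongrightarrow> g x0" using isCont_tendsto_compose[OF cont lim] .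
  have Rx0: "R (xs n) x0" for n
  proof -
    have "((\<lambda>m. k * norm (xs m - xs n) - (g (xs m) - g (xs n))) \<longlonglongrightarrow>
            k * norm (x0 - xs n) - (g x0 - g (xs n)))"
      by (intro tendsto_intros lim glim)
    moreover have "eventually (\<lambda>m. k * norm (xs m - xs n) - (g (xs m) - g (xs n)) \<le> 0) sequentially"
      using mono unfolding R_def eventually_sequentially by force
    ultimately have "k * norm (x0 - xs n) - (g x0 - g (xs n)) \<le> 0"
      by (intro tendsto_upperbound) auto
    thus ?thesis using x0C unfolding R_def by simp
  qed
  have "y = x0" if y: "y \<in> C" "k * norm (y - x0) \<le> g y - g x0" for y
  proof -
    have Ry: "R (xs n) y" for n using R_trans[OF Rx0] y unfolding R_def by blast
    have "(\<lambda>n. xs (Suc n)) \<longlonglongrightarrow> y"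
    proof (rule metric_LIMSEQ_I)
      fix e :: real assume e: "e > 0"
      obtain M where M: "\<forall>n\<ge>M. (1/2::real)^n < e * k" using pow_half_small[of "e*k"] e k by auto
      have "dist (xs (Suc n)) y < e" if "n \<ge> M" for n
      proof -
        have "norm (y - xs (Suc n)) \<le> (1/2)^n / k" using small2 Ry by blast
        also have "\<dots> < e" using M that k by (simp add: field_simps)
        finally show ?thesis by (simp add: dist_norm norm_minus_commute)
      qed
      thus "\<exists>no. \<forall>n\<ge>no. dist (xs (Suc n)) y < e" by blast
    qed
    moreover have "(\<lambda>n. xs (Suc n)) \<longlonglongrightarrow> x0" using lim by (rule LIMSEQ_Suc)
    ultimately show ?thesis using LIMSEQ_unique by blast
  qed
  moreover have "k * norm (x0 - x) \<le> g x0 - g x" using Rx0[of 0] xs0 unfolding R_def by simp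
  ultimately show ?thesis using x0C by blast
qed

lemma isCont_blinfun: "isCont (blinfun_apply g) z"
  by (intro continuous_intros)

lemma bpb:
  fixes x :: "'a::banach" and g :: "'a \<Rightarrow>\<^sub>L real"
  assumes nx: "norm x = 1" and ng: "norm g = 1" and e: "0 < \<epsilon>" "\<epsilon> < 1"
    and gx: "blinfun_apply g x > 1 - \<epsilon>^2 / 2"
  shows "\<exists>y z. norm y = 1 \<and> norm z = 1 \<and> blinfun_apply z y = 1 \<and>
               norm (z - g) < \<epsilon> \<and> norm (y - x) < \<epsilon>"
proof -
  have gle: "blinfun_apply g u \<le> norm u" for u
    using norm_blinfun[of g u] ng by simp
  define \<eta> where "\<eta> = 1 - blinfun_apply g x"
  have \<eta>0: "\<eta> \<ge> 0" using gle[of x] nx unfolding \<eta>_def by simp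
  have \<eta>e: "\<eta> < \<epsilon>^2 / 2" using gx unfolding \<eta>_def by simp
  define k where "k = (\<eta> / \<epsilon> + \<epsilon> / 2) / 2"
  have k1: "\<eta> / \<epsilon> < k" and k2: "k < \<epsilon> / 2"
  proof -
    have "\<eta> / \<epsilon> < \<epsilon> / 2" using \<eta>e e by (simp add: field_simps power2_eq_square)
    thus "\<eta> / \<epsilon> < k" "k < \<epsilon> / 2" unfolding k_def by auto
  qed
  have k0: "k > 0" using k1 \<eta>0 e by (smt (verit) divide_nonneg_pos)
  have k1': "\<eta> < k * \<epsilon>" using k1 e by (simp add: field_simps)
  have "\<exists>x0\<in>cball 0 1. k * norm (x0 - x) \<le> g x0 - g x \<and>
            (\<forall>y\<in>cball 0 1. k * norm (y - x0) \<le> g y - g x0 \<longrightarrow> y = x0)"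
  proof (rule bp_point)
    show "bdd_above (blinfun_apply g ` cball 0 1)"
      by (rule bdd_aboveI2[where M=1]) (smt (verit) gle mem_cball_0)
  qed (use nx k0 isCont_blinfun in auto)
  then obtain x0 where x0B: "norm x0 \<le> 1" and x0x: "k * norm (x0 - x) \<le> g x0 - g x"
    and maxi: "\<And>y. norm y \<le> 1 \<Longrightarrow> k * norm (y - x0) \<le> g y - g x0 \<Longrightarrow> y = x0"
    by auto
  have dx0: "norm (x0 - x) < \<epsilon>"
  proof -
    have "k * norm (x0 - x) \<le> \<eta>" using x0x gle[of x0] x0B unfolding \<eta>_def by simp
    also have "\<dots> < k * \<epsilon>" by (rule k1')
    finally show ?thesis using k0 by simp
  qed
  define T where "T = {t *\<^sub>R (y - x0) | t y. 0 \<le> t \<and> norm y \<le> (1::real)}"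
  have T0: "0 \<in> T" unfolding T_def using x0B by force
  have Tscale: "c *\<^sub>R v \<in> T" if "v \<in> T" "c \<ge> 0" for c v
  proof -
    obtain t y where "v = t *\<^sub>R (y - x0)" "0 \<le> t" "norm y \<le> 1" using \<open>v \<in> T\<close> unfolding T_def by auto
    thus ?thesis unfolding T_def using that(2)
      by (intro CollectI exI[of _ "c * t"] exI[of _ y]) auto
  qed
  have Tadd: "v + w \<in> T" if "v \<in> T" "w \<in> T" for v w
  proof -
    obtain t1 y1 where 1: "v = t1 *\<^sub>R (y1 - x0)" "0 \<le> t1" "norm y1 \<le> 1" using \<open>v \<in> T\<close> unfolding T_def by auto
    obtain t2 y2 where 2: "w = t2 *\<^sub>R (y2 - x0)" "0 \<le> t2" "norm y2 \<le> 1" using \<open>w \<in> T\<close> unfolding T_def by auto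
    show ?thesis
    proof (cases "t1 + t2 = 0")
      case True
      hence "t1 = 0" "t2 = 0" using 1 2 by auto
      thus ?thesis using 1 2 T0 by simp
    next
      case False
      define s where "s = t1 + t2"
      have s: "s > 0" using False 1 2 unfolding s_def by auto
      define y where "y = (t1 / s) *\<^sub>R y1 + (t2 / s) *\<^sub>R y2"
      have "norm y \<le> (t1 / s) * norm y1 + (t2 / s) * norm y2"
        unfolding y_def using norm_triangle_ineq[of "(t1 / s) *\<^sub>R y1" "(t2 / s) *\<^sub>R y2"] 1 2 s by simp
      also have "\<dots> \<le> (t1 / s) * 1 + (t2 / s) * 1"
        using 1 2 s by (intro add_mono mult_left_mono) auto
      also have "\<dots> = (t1 + t2) / s" by (simp add: add_divide_distrib)
      also have "\<dots> = 1" using s by (simp add: s_def)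
      finally have ny: "norm y \<le> 1" .
      have sy: "s *\<^sub>R y = t1 *\<^sub>R y1 + t2 *\<^sub>R y2" unfolding y_def using s by (simp add: scaleR_add_right)
      have "s *\<^sub>R (y - x0) = t1 *\<^sub>R y1 + t2 *\<^sub>R y2 - (t1 + t2) *\<^sub>R x0"
        using sy by (simp add: scaleR_diff_right s_def)
      hence "v + w = s *\<^sub>R (y - x0)"
        unfolding 1 2 by (simp add: scaleR_diff_right scaleR_add_left)
      moreover have "s \<ge> 0" using s by simp
      ultimately show ?thesis unfolding T_def using ny by blast
    qed
  qed
  have gT: "g v \<le> k * norm v" if "v \<in> T" for v
  proof -
    obtain t y where v: "v = t *\<^sub>R (y - x0)" "0 \<le> t" "norm y \<le> 1" using \<open>v \<in> T\<close> unfolding T_def by auto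
    have "g (y - x0) \<le> k * norm (y - x0)"
    proof (cases "y = x0")
      case False thus ?thesis using maxi[OF v(3)] by (force simp: blinfun.diff_right)
    qed simp
    hence "t * g (y - x0) \<le> t * (k * norm (y - x0))" using v(2) by (rule mult_left_mono)
    thus ?thesis using v by (simp add: blinfun.scaleR_right mult.left_commute)
  qed
  define p where "p u = (INF v\<in>T. k * norm (u + v) - g v)" for u
  have bddp: "bdd_below ((\<lambda>v. k * norm (u + v) - g v) ` T)" for u
  proof (rule bdd_belowI2[where m="- k * norm u"])
    fix v assume "v \<in> T"
    have "norm v \<le> norm (u + v) + norm u" using norm_triangle_ineq[of "u + v" "-u"] by simp
    hence "k * norm v \<le> k * norm (u + v) + k * norm u" using k0
      by (metis distrib_left mult_left_mono less_imp_le)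
    thus "- k * norm u \<le> k * norm (u + v) - g v" using gT[OF \<open>v \<in> T\<close>] by simp
  qed
  have p_le: "p u \<le> k * norm (u + v) - g v" if "v \<in> T" for u v
    unfolding p_def using bddp that by (intro cINF_lower) auto
  have p_ge: "c \<le> p u" if "\<And>v. v \<in> T \<Longrightarrow> c \<le> k * norm (u + v) - g v" for c u
    unfolding p_def using that T0 by (intro cINF_greatest) auto
  have "sublin p"
    unfolding sublin_def
  proof safe
    fix u1 u2
    have "p (u1 + u2) - p u2 \<le> k * norm (u1 + v1) - g v1" if v1: "v1 \<in> T" for v1
    proof -
      have "p (u1 + u2) - (k * norm (u1 + v1) - g v1) \<le> k * norm (u2 + v2) - g v2" if v2: "v2 \<in> T" for v2
      proof -
        have "p (u1 + u2) \<le> k * norm ((u1 + u2) + (v1 + v2)) - g (v1 + v2)"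
          using p_le Tadd[OF v1 v2] by blast
        also have "norm ((u1 + u2) + (v1 + v2)) \<le> norm (u1 + v1) + norm (u2 + v2)"
          using norm_triangle_ineq[of "u1 + v1" "u2 + v2"] by (simp add: algebra_simps)
        hence "k * norm ((u1 + u2) + (v1 + v2)) \<le> k * norm (u1 + v1) + k * norm (u2 + v2)"
          using k0 by (metis distrib_left mult_left_mono less_imp_le)
        finally show ?thesis by (simp add: blinfun.add_right)
      qed
      hence "p (u1 + u2) - (k * norm (u1 + v1) - g v1) \<le> p u2" by (intro p_ge) auto
      thus ?thesis by simp
    qed
    hence "p (u1 + u2) - p u2 \<le> p u1" by (intro p_ge) auto
    thus "p (u1 + u2) \<le> p u1 + p u2" by simp
  next
    fix c :: real and u assume c: "c > 0"
    have "p (c *\<^sub>R u) / c \<le> k * norm (u + v) - g v" if "v \<in> T" for v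
    proof -
      have "p (c *\<^sub>R u) \<le> k * norm (c *\<^sub>R u + c *\<^sub>R v) - g (c *\<^sub>R v)"
        using p_le Tscale[OF that] c by auto
      also have "\<dots> = c * (k * norm (u + v) - g v)"
        using c by (simp add: scaleR_add_right[symmetric] blinfun.scaleR_right algebra_simps del: scaleR_add_right)
      finally show ?thesis using c by (simp add: field_simps)
    qed
    hence "p (c *\<^sub>R u) / c \<le> p u" by (intro p_ge) auto
    thus "p (c *\<^sub>R u) \<le> c * p u" using c by (simp add: field_simps)
  qed
  then obtain h where h: "linear h" "\<And>u. h u \<le> p u" using hahn_banach_sublin by blast
  have hk: "h u \<le> k * norm u" for u using h(2)[of u] p_le[OF T0, of u] by simp
  have habs: "\<bar>h u\<bar> \<le> k * norm u" for u
    using hk[of u] hk[of "-u"] real_vector.linear_neg[OF h(1), of u] by simp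
  have blh: "bounded_linear h"
    by (rule bounded_linear_intro[where K=k])
      (use real_vector.linear_add[OF h(1)] real_vector.linear_scale[OF h(1)] habs in \<open>auto simp: mult.commute\<close>)
  define hb where "hb = Blinfun h"
  have hb_apply: "blinfun_apply hb = h" unfolding hb_def using blh by (rule bounded_linear_Blinfun_apply)
  have nhb: "norm hb \<le> k"
    by (rule norm_blinfun_bound) (use k0 habs hb_apply in auto)
  define ys where "ys = g - hb"
  have ys_app: "ys u = g u - h u" for u unfolding ys_def by (simp add: blinfun.diff_left hb_apply)
  have ys_max: "ys y \<le> ys x0" if "norm y \<le> 1" for y
  proof -
    have "(1::real) *\<^sub>R (y - x0) \<in> T" unfolding T_def
      by (rule CollectI, rule exI[of _ 1], rule exI[of _ y]) (use that in simp)
    hence "y - x0 \<in> T" by simp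
    hence "h (-(y - x0)) \<le> k * norm (-(y - x0) + (y - x0)) - g (y - x0)"
      using h(2) p_le order_trans by blast
    hence "g (y - x0) \<le> h (y - x0)" using real_vector.linear_neg[OF h(1), of "y - x0"] by simp
    thus ?thesis using real_vector.linear_diff[OF h(1)] by (simp add: ys_app blinfun.diff_right)
  qed
  have ys_nn: "0 \<le> ys x0" using ys_max[of 0] by (simp add: ys_app real_vector.linear_0[OF h(1)])
  have "norm ys \<le> ys x0"
  proof (rule norm_blinfun_bound[OF ys_nn])
    fix u :: 'a
    show "norm (ys u) \<le> ys x0 * norm u"
    proof (cases "u = 0")
      case True thus ?thesis by simp
    next
      case False
      define u' where "u' = (1 / norm u) *\<^sub>R u"
      have nu': "norm u' \<le> 1" "norm (-u') \<le> 1" unfolding u'_def using False by simp_all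
      have "ys u = norm u * ys u'" unfolding u'_def using False by (simp add: blinfun.scaleR_right)
      moreover have "\<bar>ys u'\<bar> \<le> ys x0" using ys_max[OF nu'(1)] ys_max[OF nu'(2)] by (simp add: blinfun.minus_right)
      ultimately show ?thesis by (simp add: abs_mult mult.commute mult_left_mono)
    qed
  qed
  moreover have "ys x0 \<le> norm ys * norm x0" using norm_blinfun[of ys x0] by simp
  moreover have "norm ys \<ge> 1 - k"
    using norm_triangle_ineq2[of g hb] ng nhb unfolding ys_def by linarith
  moreover have "norm ys \<le> 1 + k"
    using norm_triangle_ineq4[of g hb] ng nhb unfolding ys_def by linarith
  ultimately have A: "norm ys \<le> ys x0" and B: "ys x0 \<le> norm ys * norm x0"
    and C: "norm ys \<ge> 1 - k" and D: "norm ys \<le> 1 + k" by blast+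
  have nys0: "norm ys > 0" using C k2 e by linarith
  have "norm ys * norm x0 \<le> norm ys" using mult_left_le[OF x0B, of "norm ys"] by simp
  hence E: "norm ys = ys x0" using A B by linarith
  have "norm ys * 1 \<le> norm ys * norm x0" using A B by simp
  hence "1 \<le> norm x0" using nys0 by (simp only: mult_le_cancel_left_pos)
  hence "norm x0 = 1" using x0B by simp
  note nys = E C D this
  define z where "z = (1 / norm ys) *\<^sub>R ys"
  have nz: "norm z = 1" unfolding z_def using nys0 by simp
  have zx0: "z x0 = 1" unfolding z_def using nys nys0 by (simp add: blinfun.scaleR_left)
  have "norm (z - g) \<le> norm (z - ys) + norm (ys - g)"
    using norm_triangle_ineq[of "z - ys" "ys - g"] by simp
  also have "norm (z - ys) = \<bar>1 - norm ys\<bar>"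
  proof -
    have "z - ys = (1 / norm ys - 1) *\<^sub>R ys" unfolding z_def by (simp add: algebra_simps)
    hence "norm (z - ys) = \<bar>1 / norm ys - 1\<bar> * norm ys" by simp
    also have "\<dots> = \<bar>1 - norm ys\<bar>" using nys0
      by (simp add: abs_mult[symmetric] field_simps)
    finally show ?thesis .
  qed
  also have "norm (ys - g) = norm hb" unfolding ys_def by (simp add: norm_minus_commute)
  finally have "norm (z - g) \<le> \<bar>1 - norm ys\<bar> + norm hb" .
  also have "\<dots> \<le> 2 * k" using nys nhb by linarith
  also have "\<dots> < \<epsilon>" using k2 by simp
  finally show ?thesis using nz zx0 nys(4) dx0 by blast
qed

lemma SE_attain_str_exp:
  fixes ys :: "'a::real_normed_vector \<Rightarrow>\<^sub>L real"
  assumes "ys \<in> SE" "norm ys = 1" "norm y \<le> 1" "blinfun_apply ys y = 1"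
  shows "y \<in> str_exp_ball"
proof -
  obtain x0 where sx: "strongly_exposes ys x0" using assms(1) unfolding SE_def by auto
  hence x0B: "x0 \<in> cball 0 1" and sup: "ys x0 = (SUP x\<in>cball 0 1. ys x)"
    and seq: "\<And>xs. (\<forall>n. xs n \<in> cball 0 1) \<Longrightarrow> (\<lambda>n. ys (xs n)) \<longlonglongrightarrow> ys x0 \<Longrightarrow> xs \<longlonglongrightarrow> x0"
    unfolding strongly_exposes_def by auto
  have bdd: "bdd_above (blinfun_apply ys ` cball 0 1)"
  proof (rule bdd_aboveI2[where M=1])
    fix u :: 'a assume "u \<in> cball 0 1"
    hence "norm u \<le> 1" by simp
    moreover have "ys u \<le> norm ys * norm u" using norm_blinfun[of ys u] by simp
    ultimately show "ys u \<le> 1" using assms(2) by simp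
  qed
  have "ys y \<le> ys x0" unfolding sup using assms(3) bdd by (intro cSUP_upper) auto
  moreover have "ys x0 \<le> 1"
    using norm_blinfun[of ys x0] x0B assms(2) by simp
  ultimately have eq: "ys x0 = ys y" using assms(4) by simp
  have "(\<lambda>n. y) \<longlonglongrightarrow> x0" using seq[of "\<lambda>n. y"] assms(3) eq by simp
  hence "y = x0" by (simp add: LIMSEQ_const_iff)
  thus ?thesis using sx unfolding str_exp_ball_def by blast
qed

lemma str_exp_norm:
  fixes f :: "'a::real_normed_vector \<Rightarrow>\<^sub>L real"
  assumes "x \<in> str_exp_ball" "norm f = 1" "blinfun_apply f x = 1"
  shows "norm x = 1"
proof -
  have "norm x \<le> 1" using assms(1) unfolding str_exp_ball_def strongly_exposes_def by auto
  moreover have "f x \<le> norm f * norm x" using norm_blinfun[of f x] by simp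
  ultimately show ?thesis using assms by simp
qed

theorem lemma3p10:
  shows "(has_propP TYPE('a::banach)
            \<longleftrightarrow> PiX \<subseteq> closure {(x, f). x \<in> (str_exp_ball :: 'a set) \<and> f \<in> SE \<and> norm f = 1 \<and> blinfun_apply f x = 1})
       \<and> (has_propP TYPE('a::banach) \<longleftrightarrow> propP_with TYPE('a) (\<lambda>\<epsilon>. \<epsilon>^2 / 2))"
proof -
  let ?D = "{(x, f). x \<in> (str_exp_ball :: 'a set) \<and> f \<in> SE \<and> norm f = 1 \<and> blinfun_apply f x = 1}"
  have AB: "PiX \<subseteq> closure ?D" if hp: "has_propP TYPE('a)"
  proof -
    obtain eta where eta: "\<And>\<epsilon>. 0 < \<epsilon> \<Longrightarrow> \<epsilon> < 1 \<Longrightarrow> eta \<epsilon> > 0"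
      and P: "propP_with TYPE('a) eta"
      using hp unfolding has_propP_def by blast
    show ?thesis
    proof
      fix pr assume "pr \<in> (PiX :: ('a \<times> ('a \<Rightarrow>\<^sub>L real)) set)"
      then obtain x f where pr: "pr = (x, f)" and nx: "norm x = 1" and nf: "norm f = 1"
        and fx: "blinfun_apply f x = 1"
        unfolding PiX_def by auto
      show "pr \<in> closure ?D" unfolding closure_approachable
      proof (intro allI impI)
        fix e :: real assume e: "e > 0"
        define \<epsilon> where "\<epsilon> = min (e/2) (1/2)"
        have \<epsilon>: "0 < \<epsilon>" "\<epsilon> < 1" "\<epsilon> \<le> e/2" unfolding \<epsilon>_def using e by auto
        have "f x > 1 - eta \<epsilon>" using eta[OF \<epsilon>(1,2)] fx by simp
        then obtain ys y where ys: "ys \<in> SE" "norm y = 1" "norm ys = 1" "blinfun_apply ys y = 1"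
          "norm (ys - f) < \<epsilon>" "norm (y - x) < \<epsilon>"
          using P \<epsilon> nx nf unfolding propP_with_def by blast
        have "y \<in> str_exp_ball" using SE_attain_str_exp[of ys y] ys by simp
        hence inD: "(y, ys) \<in> ?D" using ys by simp
        have "dist (y, ys) (x, f) = sqrt ((dist y x)\<^sup>2 + (dist ys f)\<^sup>2)" by (rule dist_Pair_Pair)
        also have "\<dots> \<le> dist y x + dist ys f" by (rule sqrt_sum_squares_le_sum) auto
        also have "\<dots> < e" using ys \<epsilon> by (simp add: dist_norm)
        finally show "\<exists>q\<in>?D. dist q pr < e" using inD pr by blast
      qed
    qed
  qed
  have BC: "propP_with TYPE('a) (\<lambda>\<epsilon>. \<epsilon>^2 / 2)" if dens: "PiX \<subseteq> closure ?D"
    unfolding propP_with_def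
  proof (intro allI impI)
    fix \<epsilon> :: real assume \<epsilon>: "0 < \<epsilon> \<and> \<epsilon> < 1"
    fix x :: 'a and g :: "'a \<Rightarrow>\<^sub>L real"
    assume xg: "norm x = 1 \<and> norm g = 1 \<and> 1 - \<epsilon>^2 / 2 < blinfun_apply g x"
    obtain y z where yz: "norm y = 1" "norm z = 1" "blinfun_apply z y = 1"
      "norm (z - g) < \<epsilon>" "norm (y - x) < \<epsilon>"
      using bpb[of x g \<epsilon>] \<epsilon> xg by blast
    have "(y, z) \<in> PiX" unfolding PiX_def using yz by simp
    hence cl: "(y, z) \<in> closure ?D" using dens by blast
    define \<delta> where "\<delta> = min (\<epsilon> - norm (z - g)) (\<epsilon> - norm (y - x))"
    have \<delta>: "\<delta> > 0" unfolding \<delta>_def using yz by simp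
    obtain q where q: "q \<in> ?D" "dist q (y, z) < \<delta>"
      using cl \<delta> unfolding closure_approachable by blast
    obtain y' z' where q': "q = (y', z')" by (cases q)
    have D': "y' \<in> str_exp_ball" "z' \<in> SE" "norm z' = 1" "blinfun_apply z' y' = 1"
      using q(1) q' by auto
    have ny': "norm y' = 1" using str_exp_norm D' by blast
    have "dist y' y \<le> dist q (y, z)" using dist_fst_le[of q "(y, z)"] q' by simp
    hence d1: "norm (y' - y) < \<delta>" using q(2) by (simp add: dist_norm)
    have "dist z' z \<le> dist q (y, z)" using dist_snd_le[of q "(y, z)"] q' by simp
    hence d2: "norm (z' - z) < \<delta>" using q(2) by (simp add: dist_norm)
    have "norm (z' - g) \<le> norm (z' - z) + norm (z - g)"
      using norm_triangle_ineq[of "z' - z" "z - g"] by simp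
    hence e1: "norm (z' - g) < \<epsilon>" using d2 unfolding \<delta>_def by linarith
    have "norm (y' - x) \<le> norm (y' - y) + norm (y - x)"
      using norm_triangle_ineq[of "y' - y" "y - x"] by simp
    hence e2: "norm (y' - x) < \<epsilon>" using d1 unfolding \<delta>_def by linarith
    show "\<exists>ys\<in>SE. \<exists>y. norm y = 1 \<and> norm ys = 1 \<and> blinfun_apply ys y = 1 \<and>
              norm (ys - g) < \<epsilon> \<and> norm (y - x) < \<epsilon>"
      using D' ny' e1 e2 by blast
  qed
  have CA: "has_propP TYPE('a)" if "propP_with TYPE('a) (\<lambda>\<epsilon>. \<epsilon>^2 / 2)"
    unfolding has_propP_def using that by (intro exI[of _ "\<lambda>\<epsilon>. \<epsilon>^2 / 2"]) auto
  show ?thesis using AB BC CA by blast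
qed

end
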